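(* For all positive integers $n,d$, $k(n+d)\le k(n)+\left\lceil \dfrac{d}{\lfloor\sqrt{n}\rfloor}\right\rceil$.
   Context: A system on $n$ elements is a triple $(\mathcal{F},w,s)$ where $\mathcal{F}=(F_1,\dots,F_m)$ is a collection of subsets of $[n]$, $w\in[0,1]^m$ with $\sum_i w_i=1$, and $s\in[0,1]^{m\times m\times n}$ with $\sum_p s_{ijp}=1$ for all $i,j$. It is intersecting if $s_{ijp}>0$ implies $p\in F_i\cap F_j$. It is balanced if for all $p\in[n]$, $\sum_{i,j} w_iw_js_{ijp}=1/n$. Its cardinality is the size of the largest set in $\mathcal{F}$. $k(n)$ is the minimum $k$ such that there exists a balanced intersecting system on $n$ elements with cardinality $k$. *)

theory Defs
  imports Complex_Main
begin

definition is_system :: "nat \<Rightarrow> nat \<Rightarrow> (nat \<Rightarrow> nat set) \<Rightarrow> (nat \<Rightarrow> real)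
    \<Rightarrow> (nat \<Rightarrow> nat \<Rightarrow> nat \<Rightarrow> real) \<Rightarrow> bool" where
  "is_system n m F w s \<longleftrightarrow>
     (\<forall>i<m. F i \<subseteq> {1..n}) \<and>
     (\<forall>i<m. 0 \<le> w i \<and> w i \<le> 1) \<and> (\<Sum>i<m. w i) = 1 \<and>
     (\<forall>i<m. \<forall>j<m. \<forall>p\<in>{1..n}. 0 \<le> s i j p \<and> s i j p \<le> 1) \<and>
     (\<forall>i<m. \<forall>j<m. (\<Sum>p=1..n. s i j p) = 1)"

definition is_intersecting :: "nat \<Rightarrow> nat \<Rightarrow> (nat \<Rightarrow> nat set)
    \<Rightarrow> (nat \<Rightarrow> nat \<Rightarrow> nat \<Rightarrow> real) \<Rightarrow> bool" where
  "is_intersecting n m F s \<longleftrightarrow>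
     (\<forall>i<m. \<forall>j<m. \<forall>p\<in>{1..n}. s i j p > 0 \<longrightarrow> p \<in> F i \<inter> F j)"

definition is_balanced :: "nat \<Rightarrow> nat \<Rightarrow> (nat \<Rightarrow> real)
    \<Rightarrow> (nat \<Rightarrow> nat \<Rightarrow> nat \<Rightarrow> real) \<Rightarrow> bool" where
  "is_balanced n m w s \<longleftrightarrow>
     (\<forall>p\<in>{1..n}. (\<Sum>i<m. \<Sum>j<m. w i * w j * s i j p) = 1 / real n)"

definition sys_cardinality :: "nat \<Rightarrow> (nat \<Rightarrow> nat set) \<Rightarrow> nat" where
  "sys_cardinality m F = Max (card ` F ` {..<m})"

definition k_fun :: "nat \<Rightarrow> nat" where
  "k_fun n = (LEAST k. \<exists>m F w s. is_system n m F w s \<and> is_intersecting n m F s \<and>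
                 is_balanced n m w s \<and> sys_cardinality m F = k)"

end

theory Submission
  imports Defs
begin

lemma sum_divmod:
  assumes "(e::nat) > 0"
  shows "(\<Sum>q<m*e. f (q div e) (q mod e)) = (\<Sum>i<m. \<Sum>c<e. (f i c :: 'a::comm_monoid_add))"
proof (induction m)
  case 0
  then show ?case by simp
next
  case (Suc m)
  have U: "{..<Suc m * e} = {..<m*e} \<union> {m*e..<m*e+e}" by auto
  have D: "{..<m*e} \<inter> {m*e..<m*e+e} = {}" by auto
  have "(\<Sum>q\<in>{m*e..<m*e+e}. f (q div e) (q mod e)) = (\<Sum>q\<in>{0+m*e..<e+m*e}. f (q div e) (q mod e))"
    by (simp add: add.commute)
  also have "\<dots> = (\<Sum>c\<in>{0..<e}. f ((c + m*e) div e) ((c + m*e) mod e))"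
    by (rule sum.shift_bounds_nat_ivl)
  also have "\<dots> = (\<Sum>c<e. f m c)"
    using assms by (auto intro!: sum.cong simp: atLeast0LessThan)
  finally have "(\<Sum>q\<in>{m*e..<m*e+e}. f (q div e) (q mod e)) = (\<Sum>c<e. f m c)" .
  then show ?case using Suc U D by (simp add: sum.union_disjoint)
qed

lemma trivial_system:
  assumes "n \<ge> 1"
  shows "\<exists>m F w s. is_system n m F w s \<and> is_intersecting n m F s \<and>
                 is_balanced n m w s \<and> sys_cardinality m F = n"
proof -
  define F :: "nat \<Rightarrow> nat set" where "F = (\<lambda>_. {1..n})"
  define w :: "nat \<Rightarrow> real" where "w = (\<lambda>_. 1)"
  define s :: "nat \<Rightarrow> nat \<Rightarrow> nat \<Rightarrow> real" where "s = (\<lambda>_ _ _. 1 / real n)"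
  have "is_system n 1 F w s" using assms
    unfolding is_system_def F_def w_def s_def by auto
  moreover have "is_intersecting n 1 F s"
    unfolding is_intersecting_def F_def by auto
  moreover have "is_balanced n 1 w s"
    unfolding is_balanced_def w_def s_def by auto
  moreover have "sys_cardinality 1 F = n"
  proof -
    have "{..<(1::nat)} = {0}" by auto
    then show ?thesis unfolding sys_cardinality_def F_def by simp
  qed
  ultimately show ?thesis by blast
qed

lemma step_system:
  fixes n e m :: nat and F :: "nat \<Rightarrow> nat set" and w :: "nat \<Rightarrow> real"
    and s :: "nat \<Rightarrow> nat \<Rightarrow> nat \<Rightarrow> real"
  assumes n1: "n \<ge> 1" and e1: "e \<ge> 1" and ee: "e * e \<le> n + e"
    and sys: "is_system n m F w s" and int: "is_intersecting n m F s"
    and bal: "is_balanced n m w s"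
  shows "\<exists>m' F' w' s'. is_system (n+e) m' F' w' s' \<and> is_intersecting (n+e) m' F' s' \<and>
                 is_balanced (n+e) m' w' s' \<and> sys_cardinality m' F' = sys_cardinality m F + 1"
proof -
  define \<alpha> :: real where "\<alpha> = real (e*e) / real (n+e)"
  have epos: "e > 0" using e1 by simp
  have a0: "0 \<le> \<alpha>" unfolding \<alpha>_def by simp
  have ee': "real (e*e) \<le> real (n+e)" using ee by (simp only: of_nat_le_iff)
  have a1: "\<alpha> \<le> 1" unfolding \<alpha>_def using ee' n1 by (simp add: divide_le_eq_1)
  define S :: "nat \<Rightarrow> nat \<Rightarrow> nat \<Rightarrow> nat \<Rightarrow> nat \<Rightarrow> real" where
    "S = (\<lambda>i c j c' p. if p \<le> n then s i j p * (1 - (if c = c' then \<alpha> else 0))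
           else (if c = c' then (if p = n + 1 + c then \<alpha> else 0) else 0))"
  define F' where "F' = (\<lambda>q. F (q div e) \<union> {n + 1 + q mod e})"
  define w' where "w' = (\<lambda>q. w (q div e) / real e)"
  define s' where "s' = (\<lambda>q q' p. S (q div e) (q mod e) (q' div e) (q' mod e) p)"
  have Fsub: "\<And>i. i < m \<Longrightarrow> F i \<subseteq> {1..n}" and w01: "\<And>i. i < m \<Longrightarrow> 0 \<le> w i \<and> w i \<le> 1"
    and wsum: "(\<Sum>i<m. w i) = 1"
    and s01: "\<And>i j p. i < m \<Longrightarrow> j < m \<Longrightarrow> p \<in> {1..n} \<Longrightarrow> 0 \<le> s i j p \<and> s i j p \<le> 1"
    and ssum: "\<And>i j. i < m \<Longrightarrow> j < m \<Longrightarrow> (\<Sum>p=1..n. s i j p) = 1"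
    using sys unfolding is_system_def by auto
  have qdiv: "\<And>q. q < m * e \<Longrightarrow> q div e < m" by (simp add: less_mult_imp_div_less)
  have qmod: "\<And>q. q mod e < e" using epos by simp
  have Ssum: "(\<Sum>p=1..n+e. S i c j c' p) = 1" if "i < m" "j < m" "c < e" for i c j c'
  proof -
    have U: "{1..n+e} = {1..n} \<union> {Suc n..n+e}" by auto
    have "(\<Sum>p=1..n. S i c j c' p) = (\<Sum>p=1..n. s i j p) * (1 - (if c = c' then \<alpha> else 0))"
      unfolding S_def by (simp add: sum_distrib_right)
    also have "\<dots> = 1 - (if c = c' then \<alpha> else 0)" using ssum that by simp
    finally have A: "(\<Sum>p=1..n. S i c j c' p) = 1 - (if c = c' then \<alpha> else 0)" .
    have "(\<Sum>p=Suc n..n+e. S i c j c' p) = (\<Sum>p=Suc n..n+e. (if c = c' then (if p = n + 1 + c then \<alpha> else 0) else 0))"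
      unfolding S_def by (intro sum.cong) auto
    also have "\<dots> = (if c = c' then \<alpha> else 0)"
      using that by (cases "c = c'") auto
    finally have B: "(\<Sum>p=Suc n..n+e. S i c j c' p) = (if c = c' then \<alpha> else 0)" .
    have "(\<Sum>p=1..n+e. S i c j c' p) = (\<Sum>p=1..n. S i c j c' p) + (\<Sum>p=Suc n..n+e. S i c j c' p)"
      unfolding U by (rule sum.union_disjoint) auto
    then show ?thesis by (simp only: A B)
  qed
  have "is_system (n+e) (m*e) F' w' s'"
    unfolding is_system_def
  proof (intro conjI allI impI ballI)
    fix q assume "q < m * e"
    then show "F' q \<subseteq> {1..n+e}" using Fsub[of "q div e"] qdiv qmod[of q] unfolding F'_def
      by (auto simp: Suc_le_eq)
  next
    fix q assume "q < m * e"
    then show "0 \<le> w' q" "w' q \<le> 1" using w01[of "q div e"] qdiv e1 unfolding w'_def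
      by (auto simp: divide_le_eq_1 order_trans)
  next
    have "(\<Sum>q<m*e. w' q) = (\<Sum>i<m. \<Sum>c<e. w i / real e)"
      unfolding w'_def using sum_divmod[OF epos, of "\<lambda>i c. w i / real e" m] by simp
    also have "\<dots> = 1" using wsum epos by simp
    finally show "(\<Sum>q<m*e. w' q) = 1" .
  next
    fix q q' p assume "q < m * e" "q' < m * e" "p \<in> {1..n+e}"
    then show "0 \<le> s' q q' p" "s' q q' p \<le> 1"
      using s01[of "q div e" "q' div e" p] qdiv a0 a1 unfolding s'_def S_def
      by (auto intro!: mult_nonneg_nonneg mult_le_one)
  next
    fix q q' assume "q < m * e" "q' < m * e"
    then show "(\<Sum>p=1..n+e. s' q q' p) = 1" unfolding s'_def using Ssum qdiv qmod by simp
  qed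
  moreover have "is_intersecting (n+e) (m*e) F' s'"
    unfolding is_intersecting_def
  proof (intro allI impI ballI)
    fix q q' p assume q: "q < m * e" "q' < m * e" and p: "p \<in> {1..n+e}" and pos: "0 < s' q q' p"
    show "p \<in> F' q \<inter> F' q'"
    proof (cases "p \<le> n")
      case True
      then have "0 \<le> 1 - (if q mod e = q' mod e then \<alpha> else 0)" using a1 by auto
      then have "0 < s (q div e) (q' div e) p" using pos True unfolding s'_def S_def
        by (auto simp: zero_less_mult_iff)
      moreover have "q div e < m" "q' div e < m" "p \<in> {1..n}" using q qdiv p True by auto
      ultimately have "p \<in> F (q div e) \<inter> F (q' div e)" using int
        unfolding is_intersecting_def by blast
      then show ?thesis unfolding F'_def by auto
    next
      case False
      then have "q mod e = q' mod e" "p = n + 1 + q mod e" using pos unfolding s'_def S_def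
        by (auto split: if_splits)
      then show ?thesis unfolding F'_def by auto
    qed
  qed
  moreover have "is_balanced (n+e) (m*e) w' s'"
    unfolding is_balanced_def
  proof
    fix p assume p: "p \<in> {1..n+e}"
    define T where "T = (\<lambda>i c j c'. (w i / real e) * (w j / real e) * S i c j c' p)"
    have inner: "(\<Sum>q'<m*e. w' q * w' q' * s' q q' p) = (\<Sum>j<m. \<Sum>c'<e. T (q div e) (q mod e) j c')" for q
      using sum_divmod[OF epos, of "\<lambda>j c'. T (q div e) (q mod e) j c'" m]
      unfolding w'_def s'_def T_def by simp
    have outer: "(\<Sum>q<m*e. \<Sum>q'<m*e. w' q * w' q' * s' q q' p) = (\<Sum>i<m. \<Sum>c<e. \<Sum>j<m. \<Sum>c'<e. T i c j c')"
      unfolding inner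
      using sum_divmod[OF epos, of "\<lambda>i c. \<Sum>j<m. \<Sum>c'<e. T i c j c'" m] by simp
    have en: "real e - \<alpha> = real e * real n / real (n+e)"
      unfolding \<alpha>_def using epos by (simp add: field_simps)
    show "(\<Sum>q<m*e. \<Sum>q'<m*e. w' q * w' q' * s' q q' p) = 1 / real (n+e)"
    proof (cases "p \<le> n")
      case True
      have pn: "p \<in> {1..n}" using p True by auto
      have L1: "(\<Sum>c'<e. T i c j c') = (w i / real e) * (w j / real e) * s i j p * (real e - \<alpha>)"
        if "c < e" for i c j
      proof -
        have "(\<Sum>c'<e. T i c j c') = (\<Sum>c'<e. (w i / real e) * (w j / real e) * s i j p
                 - (if c = c' then (w i / real e) * (w j / real e) * s i j p * \<alpha> else 0))"
          unfolding T_def S_def using True by (intro sum.cong) (auto simp: algebra_simps)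
        also have "\<dots> = real e * ((w i / real e) * (w j / real e) * s i j p)
                 - (w i / real e) * (w j / real e) * s i j p * \<alpha>"
          using that by (simp add: sum_subtractf)
        finally have "(\<Sum>c'<e. T i c j c') = real e * ((w i / real e) * (w j / real e) * s i j p)
                 - (w i / real e) * (w j / real e) * s i j p * \<alpha>" .
        then show ?thesis by (metis mult.commute right_diff_distrib)
      qed
      have L2: "(\<Sum>c<e. \<Sum>j<m. \<Sum>c'<e. T i c j c') = (real e - \<alpha>) / real e * (\<Sum>j<m. w i * w j * s i j p)" for i
      proof -
        have "(\<Sum>c<e. \<Sum>j<m. \<Sum>c'<e. T i c j c') = (\<Sum>c<e. \<Sum>j<m. (w i / real e) * (w j / real e) * s i j p * (real e - \<alpha>))"
          using L1 by (intro sum.cong refl) auto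
        also have "\<dots> = real e * (\<Sum>j<m. (w i / real e) * (w j / real e) * s i j p * (real e - \<alpha>))"
          by simp
        also have "\<dots> = (\<Sum>j<m. (real e - \<alpha>) / real e * (w i * w j * s i j p))"
          unfolding sum_distrib_left using epos by (intro sum.cong refl) (simp add: field_simps)
        also have "\<dots> = (real e - \<alpha>) / real e * (\<Sum>j<m. w i * w j * s i j p)"
          by (simp add: sum_distrib_left)
        finally show ?thesis .
      qed
      have "(\<Sum>i<m. \<Sum>c<e. \<Sum>j<m. \<Sum>c'<e. T i c j c') = (real e - \<alpha>) / real e * (\<Sum>i<m. \<Sum>j<m. w i * w j * s i j p)"
        unfolding L2 by (simp add: sum_distrib_left)
      also have "\<dots> = (real e - \<alpha>) / real e * (1 / real n)"
        using bal pn unfolding is_balanced_def by simp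
      also have "\<dots> = 1 / real (n+e)"
      proof -
        have "real e * real e + real e * real n > 0" using epos by (simp add: add_pos_nonneg)
        then show ?thesis unfolding en using epos n1 by (simp add: field_simps)
      qed
      finally show ?thesis unfolding outer .
    next
      case False
      then obtain c0 where c0: "c0 < e" "p = n + 1 + c0" using p
      proof -
        have "p - (n+1) < e" "p = n + 1 + (p - (n+1))" using p False by auto
        then show ?thesis using that by blast
      qed
      have L1: "(\<Sum>c'<e. T i c j c') = (if c = c0 then (w i / real e) * (w j / real e) * \<alpha> else 0)"
        if "c < e" for i c j
      proof -
        have "(\<Sum>c'<e. T i c j c') = (\<Sum>c'<e. (if c' = c then (if c = c0 then (w i / real e) * (w j / real e) * \<alpha> else 0) else 0))"
          unfolding T_def S_def using False c0 by (intro sum.cong) auto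
        also have "\<dots> = (if c = c0 then (w i / real e) * (w j / real e) * \<alpha> else 0)"
          using that by simp
        finally show ?thesis .
      qed
      have L2: "(\<Sum>c<e. \<Sum>j<m. \<Sum>c'<e. T i c j c') = w i * (\<alpha> / (real e * real e))" for i
      proof -
        have "(\<Sum>c<e. \<Sum>j<m. \<Sum>c'<e. T i c j c') = (\<Sum>c<e. \<Sum>j<m. (if c = c0 then (w i / real e) * (w j / real e) * \<alpha> else 0))"
          using L1 by (intro sum.cong refl) auto
        also have "\<dots> = (\<Sum>c<e. (if c = c0 then (\<Sum>j<m. (w i / real e) * (w j / real e) * \<alpha>) else 0))"
          by (intro sum.cong refl) auto
        also have "\<dots> = (\<Sum>j<m. (w i / real e) * (w j / real e) * \<alpha>)"
          using c0 by simp
        also have "\<dots> = w i * (\<alpha> / (real e * real e)) * (\<Sum>j<m. w j)"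
          unfolding sum_distrib_left by (intro sum.cong refl) (simp add: field_simps)
        finally show ?thesis using wsum by simp
      qed
      have "(\<Sum>i<m. \<Sum>c<e. \<Sum>j<m. \<Sum>c'<e. T i c j c') = (\<Sum>i<m. w i) * (\<alpha> / (real e * real e))"
        unfolding L2 by (simp only: sum_distrib_right)
      also have "\<dots> = 1 / real (n+e)"
        using wsum epos unfolding \<alpha>_def by simp
      finally show ?thesis unfolding outer .
    qed
  qed
  moreover have "sys_cardinality (m*e) F' = sys_cardinality m F + 1"
  proof -
    have m0: "m \<noteq> 0"
    proof
      assume "m = 0" then show False using wsum by simp
    qed
    have cF: "card (F' q) = card (F (q div e)) + 1" if "q < m * e" for q
    proof -
      have sub: "F (q div e) \<subseteq> {1..n}" using Fsub qdiv that by blast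
      have fin: "finite (F (q div e))" using finite_subset[OF sub] by simp
      have nin: "n + 1 + q mod e \<notin> F (q div e)" using sub by auto
      have "F' q = insert (n + 1 + q mod e) (F (q div e))" unfolding F'_def by blast
      then show ?thesis using fin nin by simp
    qed
    have img: "card ` F' ` {..<m*e} = (\<lambda>i. card (F i) + 1) ` {..<m}"
    proof (rule set_eqI, rule iffI)
      fix x assume "x \<in> card ` F' ` {..<m*e}"
      then obtain q where q: "q < m * e" "x = card (F' q)" by blast
      then have "x = card (F (q div e)) + 1" "q div e \<in> {..<m}" using cF qdiv by auto
      then show "x \<in> (\<lambda>i. card (F i) + 1) ` {..<m}" by blast
    next
      fix x assume "x \<in> (\<lambda>i. card (F i) + 1) ` {..<m}"
      then obtain i where i: "i < m" "x = card (F i) + 1" by blast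
      have "i * e < m * e" using i epos by simp
      moreover have "(i * e) div e = i" using epos by simp
      ultimately have "card (F' (i*e)) = x" "i * e \<in> {..<m*e}" using cF[of "i*e"] i by auto
      then show "x \<in> card ` F' ` {..<m*e}" by (metis imageI)
    qed
    have fin: "finite {..<m}" by simp
    have "0 \<in> {..<m}" using m0 by simp
    then have ne: "{..<m} \<noteq> {}" by blast
    have "Max ((\<lambda>i. card (F i) + 1) ` {..<m}) = Max ((\<lambda>i. card (F i)) ` {..<m}) + 1"
      by (rule Max_add_commute[OF fin ne])
    moreover have "(\<lambda>i. card (F i)) ` {..<m} = card ` F ` {..<m}" by (rule image_image[symmetric])
    ultimately show ?thesis unfolding sys_cardinality_def img by (simp only:)
  qed
  ultimately have ALL: "is_system (n+e) (m*e) F' w' s' \<and> is_intersecting (n+e) (m*e) F' s' \<and>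
       is_balanced (n+e) (m*e) w' s' \<and> sys_cardinality (m*e) F' = sys_cardinality m F + 1"
    by (simp only: conj_assoc)
  show ?thesis
    apply (rule exI[where x="m*e"])
    apply (rule exI[where x=F'])
    apply (rule exI[where x=w'])
    apply (rule exI[where x=s'])
    by (rule ALL)
qed

lemma k_fun_attained:
  assumes "n \<ge> 1"
  shows "\<exists>m F w s. is_system n m F w s \<and> is_intersecting n m F s \<and>
                 is_balanced n m w s \<and> sys_cardinality m F = k_fun n"
  unfolding k_fun_def
  by (rule LeastI_ex) (use trivial_system[OF assms] in blast)

lemma k_fun_step:
  assumes "n \<ge> 1" "e \<ge> 1" "e * e \<le> n + e"
  shows "k_fun (n + e) \<le> k_fun n + 1"
proof -
  obtain m F w s where H: "is_system n m F w s" "is_intersecting n m F s"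
      "is_balanced n m w s" "sys_cardinality m F = k_fun n"
    using k_fun_attained[OF assms(1)] by blast
  obtain m' F' w' s' where H': "is_system (n+e) m' F' w' s'" "is_intersecting (n+e) m' F' s'"
      "is_balanced (n+e) m' w' s'" "sys_cardinality m' F' = sys_cardinality m F + 1"
    using step_system[OF assms H(1-3)] by blast
  have C: "sys_cardinality m' F' = k_fun n + 1" using H'(4) H(4) by simp
  have E: "\<exists>a b c d. is_system (n+e) a b c d \<and> is_intersecting (n+e) a b d \<and>
      is_balanced (n+e) a c d \<and> sys_cardinality a b = k_fun n + 1"
    using H'(1-3) C by blast
  then show ?thesis unfolding k_fun_def[of "n+e"] by (rule Least_le)
qed

lemma k_fun_iter:
  assumes r1: "r \<ge> 1" and rr: "r * r \<le> n" and n1: "n \<ge> 1"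
  shows "k_fun (n + d) \<le> k_fun n + (d + r - 1) div r"
  using rr n1
proof (induction d arbitrary: n rule: less_induct)
  case (less d)
  show ?case
  proof (cases "d \<le> r")
    case True
    show ?thesis
    proof (cases "d = 0")
      case True then show ?thesis by simp
    next
      case False
      have "d * d \<le> r * r" using \<open>d \<le> r\<close> by (simp add: mult_le_mono)
      then have "k_fun (n + d) \<le> k_fun n + 1"
        using k_fun_step[of n d] less.prems False by simp
      moreover have "(d + r - 1) div r = 1" using False \<open>d \<le> r\<close> r1
        by (simp add: div_nat_eqI)
      ultimately show ?thesis by simp
    qed
  next
    case False
    have rr': "r * r \<le> n + r" using less.prems by simp
    have IH: "k_fun ((n + r) + (d - r)) \<le> k_fun (n + r) + (d - r + r - 1) div r"
      using less.IH[of "d - r" "n + r"] False r1 less.prems by simp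
    have st: "k_fun (n + r) \<le> k_fun n + 1"
      using k_fun_step[of n r] less.prems r1 by simp
    have "(d - r + r - 1) div r + 1 = (d + r - 1) div r"
    proof -
      define a where "a = d - r + r - 1"
      have "d + r - 1 = a + r" unfolding a_def using False r1 by simp
      then have "(d + r - 1) div r = (a + r) div r" by (rule arg_cong)
      also have "\<dots> = a div r + 1" using r1 by simp
      finally show ?thesis unfolding a_def by simp
    qed
    moreover have "n + d = (n + r) + (d - r)" using False by simp
    ultimately show ?thesis using IH st by simp
  qed
qed

theorem corollary1:
  fixes n d :: nat
  assumes "n \<ge> 1" and "d \<ge> 1"
  shows "real (k_fun (n + d)) \<le>
           real (k_fun n) + of_int \<lceil>real d / of_int \<lfloor>sqrt (real n)\<rfloor>\<rceil>"
proof -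
  define r where "r = nat \<lfloor>sqrt (real n)\<rfloor>"
  have s1: "sqrt (real n) \<ge> 1" using assms by simp
  then have fl1: "\<lfloor>sqrt (real n)\<rfloor> \<ge> 1" by simp
  then have rr: "of_int \<lfloor>sqrt (real n)\<rfloor> = real r" unfolding r_def by simp
  have r1: "r \<ge> 1" unfolding r_def using nat_mono[OF fl1] by simp
  have "real r \<le> sqrt (real n)" using rr of_int_floor_le[of "sqrt (real n)"] by linarith
  then have "real r * real r \<le> sqrt (real n) * sqrt (real n)" by (intro mult_mono) auto
  then have "real (r * r) \<le> real n" by simp
  then have rrn: "r * r \<le> n" by (simp only: of_nat_le_iff)
  have K: "k_fun (n + d) \<le> k_fun n + (d + r - 1) div r"
    using k_fun_iter[OF r1 rrn assms(1)] .
  define q where "q = \<lceil>real d / real r\<rceil>"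
  have "real d / real r \<le> of_int q" unfolding q_def by simp
  then have "real d \<le> of_int q * real r" using r1 by (simp add: divide_le_eq)
  moreover have q0: "q \<ge> 0" unfolding q_def
    by (simp add: ceiling_le_zero[symmetric] less_le_trans[OF _ divide_nonneg_nonneg[of "real d" "real r"]] del: ceiling_le_zero)
  ultimately have "real d \<le> real (nat q * r)" by simp
  then have dq: "d \<le> nat q * r" by (simp only: of_nat_le_iff)
  have "(d + r - 1) div r \<le> (nat q * r + (r - 1)) div r"
    using dq r1 by (intro div_le_mono) simp
  also have "\<dots> = nat q" using r1 by (intro div_nat_eqI) (auto simp: algebra_simps)
  finally have "(d + r - 1) div r \<le> nat q" .
  then have "real ((d + r - 1) div r) \<le> real (nat q)" by (simp only: of_nat_le_iff)
  also have "real (nat q) = of_int q" using q0 by simp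
  finally have X: "real ((d + r - 1) div r) \<le> of_int q" .
  have "real (k_fun (n + d)) \<le> real (k_fun n + (d + r - 1) div r)" using K by (simp only: of_nat_le_iff)
  also have "\<dots> = real (k_fun n) + real ((d + r - 1) div r)" by simp
  finally have "real (k_fun (n + d)) \<le> real (k_fun n) + of_int q" using X by linarith
  then show ?thesis unfolding q_def rr .
qed

end
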